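(* Let $\lambda$ be a nonzero real number. For all integers $m,n\ge0$, \[ \phi_{n+m,\lambda}(x)=\sum_{j=0}^{m}\sum_{k=0}^{n}{m\brace j}_\lambda\binom{n}{k}(j-m\lambda)_{n-k,\lambda}\,x^{j}\,\phi_{k,\lambda}(x) \] as polynomials in $x$; equivalently, the same identity holds with $x$ replaced by the boson creation operator $a^{+}$.
   Context: $(x)_{0,\lambda}=1$ and $(x)_{n,\lambda}=x(x-\lambda)\cdots(x-(n-1)\lambda)$ for $n\ge1$. The degenerate Stirling numbers of the second kind ${n\brace k}_\lambda$ are defined by $(x)_{n,\lambda}=\sum_{k=0}^{n}{n\brace k}_\lambda (x)_k$, with $(x)_k=x(x-1)\cdots(x-k+1)$. The degenerate Bell polynomials are $\phi_{n,\lambda}(x)=\sum_{k=0}^{n}{n\brace k}_\lambda x^{k}$ (equivalently $\sum_{n\ge0}\phi_{n,\lambda}(x)t^n/n!=e^{x((1+\lambda t)^{1/\lambda}-1)}$). *)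

theory Defs
  imports "HOL-Analysis.Analysis" "HOL-Computational_Algebra.Polynomial"
begin

definition deg_fall :: "real \<Rightarrow> real \<Rightarrow> nat \<Rightarrow> real" where
  "deg_fall lam x n = (\<Prod>i<n. x - real i * lam)"

definition fall :: "real \<Rightarrow> nat \<Rightarrow> real" where
  "fall x k = (\<Prod>i<k. x - real i)"

definition deg_stirling2 :: "real \<Rightarrow> nat \<Rightarrow> nat \<Rightarrow> real" where
  "deg_stirling2 lam n =
     (THE S. (\<forall>x. deg_fall lam x n = (\<Sum>k\<le>n. S k * fall x k)) \<and> (\<forall>k>n. S k = 0))"

definition deg_bell :: "real \<Rightarrow> nat \<Rightarrow> real poly" where
  "deg_bell lam n = (\<Sum>k\<le>n. monom (deg_stirling2 lam n k) k)"

end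

theory Submission imports Defs begin

fun dS :: "real \<Rightarrow> nat \<Rightarrow> nat \<Rightarrow> real" where
  "dS lam 0 k = (if k = 0 then 1 else 0)"
| "dS lam (Suc n) k = (if k = 0 then 0 else dS lam n (k-1)) + (real k - real n * lam) * dS lam n k"

lemma dS_zero: "k > n \<Longrightarrow> dS lam n k = 0"
  by (induction n arbitrary: k) auto

lemma fall_Suc: "fall x (Suc k) = fall x k * (x - real k)"
  by (simp add: fall_def)

lemma deg_fall_Suc: "deg_fall lam x (Suc k) = deg_fall lam x k * (x - real k * lam)"
  by (simp add: deg_fall_def)

lemma fall_nat_zero: "k > i \<Longrightarrow> fall (real i) k = 0"
  unfolding fall_def by (rule prod_zero) auto

lemma fall_nat_nz: "fall (real k) k \<noteq> 0"
  unfolding fall_def by (subst prod_zero_iff) auto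

lemma dS_expand: "deg_fall lam x n = (\<Sum>k\<le>n. dS lam n k * fall x k)"
proof (induction n)
  case 0 then show ?case by (simp add: deg_fall_def fall_def)
next
  case (Suc n)
  have "deg_fall lam x (Suc n) = (\<Sum>k\<le>n. dS lam n k * fall x k * (x - real n * lam))"
    by (simp add: deg_fall_Suc Suc sum_distrib_right)
  also have "\<dots> = (\<Sum>k\<le>n. dS lam n k * fall x (Suc k)) + (\<Sum>k\<le>n. (real k - real n * lam) * dS lam n k * fall x k)"
    by (simp add: fall_Suc sum.distrib[symmetric] algebra_simps)
  also have "(\<Sum>k\<le>n. (real k - real n * lam) * dS lam n k * fall x k) = (\<Sum>k\<le>Suc n. (real k - real n * lam) * dS lam n k * fall x k)"
    by (simp add: dS_zero)
  also have "(\<Sum>k\<le>n. dS lam n k * fall x (Suc k)) = (\<Sum>k\<le>Suc n. (if k = 0 then 0 else dS lam n (k-1)) * fall x k)"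
    by (subst sum.atMost_Suc_shift) simp
  finally show ?case by (simp add: sum.distrib[symmetric] algebra_simps)
qed

lemma uniq:
  assumes "\<forall>x. (\<Sum>k\<le>n. (a k::real) * fall x k) = 0"
  shows "k \<le> n \<Longrightarrow> a k = 0"
proof (induction k rule: less_induct)
  case (less k)
  have "0 = (\<Sum>i\<le>n. a i * fall (real k) i)" using assms by simp
  also have "\<dots> = (\<Sum>i\<in>{k}. a i * fall (real k) i)"
  proof (rule sum.mono_neutral_right)
    show "\<forall>i\<in>{..n} - {k}. a i * fall (real k) i = 0"
      using less by (auto simp: fall_nat_zero) (metis fall_nat_zero linorder_neqE_nat mult_zero_right)
  qed (use less in auto)
  finally show ?case using fall_nat_nz[of k] by simp
qed

lemma deg_stirling2_eq: "deg_stirling2 lam n = dS lam n"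
  unfolding deg_stirling2_def
proof (rule the_equality)
  show "(\<forall>x. deg_fall lam x n = (\<Sum>k\<le>n. dS lam n k * fall x k)) \<and> (\<forall>k>n. dS lam n k = 0)"
    using dS_expand dS_zero by blast
next
  fix S assume S: "(\<forall>x. deg_fall lam x n = (\<Sum>k\<le>n. S k * fall x k)) \<and> (\<forall>k>n. S k = 0)"
  show "S = dS lam n"
  proof
    fix k
    have "\<forall>x. (\<Sum>k\<le>n. (S k - dS lam n k) * fall x k) = 0"
      using S dS_expand[of lam _ n] by (simp add: algebra_simps sum_subtractf)
    then have "k \<le> n \<Longrightarrow> S k - dS lam n k = 0" by (rule uniq)
    then show "S k = dS lam n k" using S dS_zero[of n k lam] by (cases "k \<le> n") auto
  qed
qed

lemma coeff_bell: "coeff (deg_bell lam n) i = dS lam n i"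
  by (auto simp: deg_bell_def coeff_sum deg_stirling2_eq dS_zero coeff_monom)

lemma bell_Suc: "deg_bell lam (Suc n) = pCons 0 (deg_bell lam n) + pCons 0 (pderiv (deg_bell lam n))
   - smult (real n * lam) (deg_bell lam n)"
  by (rule poly_eqI) (auto simp: coeff_bell coeff_pCons coeff_pderiv algebra_simps split: nat.split)

lemma pCons0_mult: "pCons 0 (p::real poly) = monom 1 1 * p"
  by (rule poly_eqI) (auto simp: coeff_pCons coeff_monom_mult split: nat.split)

definition LL :: "real \<Rightarrow> real poly \<Rightarrow> real poly" where
  "LL a q = monom 1 1 * q + monom 1 1 * pderiv q + smult a q"

lemma LL_add: "LL a (p + q) = LL a p + LL a q"
  by (simp add: LL_def pderiv_add smult_add_right ring_distribs)

lemma LL_sum: "LL a (\<Sum>k\<in>A. f k) = (\<Sum>k\<in>A. LL a (f k))"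
proof -
  have "LL a 0 = 0" by (simp add: LL_def)
  then show ?thesis by (induction A rule: infinite_finite_induct) (auto simp: LL_add)
qed

lemma LL_smult: "LL a (smult c q) = smult c (LL a q)"
  by (simp add: LL_def pderiv_smult smult_add_right mult.commute)

lemma monom_pderiv_x: "monom 1 1 * pderiv (monom (1::real) j) = smult (real j) (monom 1 j)"
  by (rule poly_eqI) (auto simp: coeff_monom_mult coeff_pderiv coeff_monom split: nat.split)

lemma LL_xj: "monom 1 1 * (monom 1 j * q) + monom 1 1 * (pderiv (monom 1 j * q)) - smult b (monom 1 j * q)
   = monom 1 j * LL (real j - b) q"
proof -
  have "monom 1 1 * (pderiv (monom 1 j * q)) = monom 1 j * (monom 1 1 * pderiv q) + q * (monom 1 1 * pderiv (monom 1 j))"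
    by (simp add: pderiv_mult algebra_simps)
  also have "\<dots> = monom 1 j * (monom 1 1 * pderiv q) + smult (real j) (monom 1 j * q)"
    by (simp only: monom_pderiv_x) (simp add: ac_simps)
  finally show ?thesis
    by (simp add: LL_def algebra_simps smult_diff_left)
qed

lemma bell_Suc': "deg_bell lam (Suc n) = monom 1 1 * deg_bell lam n + monom 1 1 * pderiv (deg_bell lam n)
   - smult (real n * lam) (deg_bell lam n)"
  using bell_Suc[of lam n] by (simp add: pCons0_mult)

lemma LL_bell: "LL a (deg_bell lam k) = deg_bell lam (Suc k) + smult (a + real k * lam) (deg_bell lam k)"
  by (simp add: bell_Suc' LL_def algebra_simps smult_add_left)

lemma pascal_scalar:
  fixes g :: "nat \<Rightarrow> real" and lam c :: real
  defines "d \<equiv> deg_fall lam c"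
  shows "(\<Sum>k\<le>n. real (n choose k) * d (n-k) * (g (Suc k) + (c - real (n-k) * lam) * g k))
       = (\<Sum>k\<le>Suc n. real (Suc n choose k) * d (Suc n - k) * g k)"
proof -
  have dS: "d (Suc r) = d r * (c - real r * lam)" for r by (simp add: d_def deg_fall_Suc)
  have B: "(\<Sum>k\<le>n. real (n choose k) * d (Suc (n-k)) * g k)
      = d (Suc n) * g 0 + (\<Sum>i\<le>n. real (n choose Suc i) * d (n-i) * g (Suc i))"
  proof -
    have "(\<Sum>k\<le>n. real (n choose k) * d (Suc (n-k)) * g k) = (\<Sum>k\<le>Suc n. real (n choose k) * d (Suc (n-k)) * g k)"
      by simp
    also have "\<dots> = d (Suc n) * g 0 + (\<Sum>i\<le>n. real (n choose Suc i) * d (Suc (n - Suc i)) * g (Suc i))"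
      by (subst sum.atMost_Suc_shift) simp
    also have "(\<Sum>i\<le>n. real (n choose Suc i) * d (Suc (n - Suc i)) * g (Suc i)) = (\<Sum>i\<le>n. real (n choose Suc i) * d (n-i) * g (Suc i))"
    proof (rule sum.cong)
      fix i assume "i \<in> {..n}"
      then show "real (n choose Suc i) * d (Suc (n - Suc i)) * g (Suc i) = real (n choose Suc i) * d (n-i) * g (Suc i)"
        by (cases "i < n") (auto simp: Suc_diff_Suc)
    qed simp
    finally show ?thesis .
  qed
  have "(\<Sum>k\<le>n. real (n choose k) * d (n-k) * (g (Suc k) + (c - real (n-k) * lam) * g k))
     = (\<Sum>k\<le>n. real (n choose k) * d (n-k) * g (Suc k)) + (\<Sum>k\<le>n. real (n choose k) * d (Suc (n-k)) * g k)"
    by (simp add: dS sum.distrib[symmetric] algebra_simps)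
  also have "\<dots> = (\<Sum>k\<le>n. real (n choose k) * d (n-k) * g (Suc k)) + d (Suc n) * g 0 + (\<Sum>i\<le>n. real (n choose Suc i) * d (n-i) * g (Suc i))"
    by (simp only: B)
  also have "\<dots> = d (Suc n) * g 0 + (\<Sum>i\<le>n. (real (n choose i) + real (n choose Suc i)) * d (n-i) * g (Suc i))"
    by (simp add: sum.distrib distrib_right)
  also have "\<dots> = (\<Sum>k\<le>Suc n. real (Suc n choose k) * d (Suc n - k) * g k)"
    by (subst sum.atMost_Suc_shift) simp
  finally show ?thesis .
qed

lemma pascal_poly:
  fixes f :: "nat \<Rightarrow> real poly"
  shows "(\<Sum>k\<le>n. smult (real (n choose k) * deg_fall lam c (n-k)) (f (Suc k) + smult (c - real (n-k) * lam) (f k)))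
       = (\<Sum>k\<le>Suc n. smult (real (Suc n choose k) * deg_fall lam c (Suc n - k)) (f k))" (is "?l = ?r")
proof (rule poly_eqI)
  fix i
  show "coeff ?l i = coeff ?r i"
    using pascal_scalar[where g = "\<lambda>k. coeff (f k) i" and lam = lam and c = c and n = n]
    by (simp add: coeff_sum algebra_simps)
qed

lemma LL_xj': "LL a (monom 1 j * q) = monom 1 j * LL (real j + a) q"
  using LL_xj[of j q "-a"] by (simp add: LL_def)

lemma bell_LL: "deg_bell lam (Suc N) = LL (- (real N * lam)) (deg_bell lam N)"
  by (simp add: bell_Suc' LL_def)

lemma bell0: "deg_bell lam 0 = 1"
  by (rule poly_eqI) (simp add: coeff_bell coeff_1)

lemma regroup: "(\<Sum>k\<in>A. smult (a * h k) (p * q k)) = smult a (p * (\<Sum>k\<in>A. smult (h k) (q k)))"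
  by (induction A rule: infinite_finite_induct) (simp_all add: smult_add_right distrib_left mult_smult_right)

theorem theorem2p5:
  fixes lam :: real and m n :: nat
  assumes "lam \<noteq> 0"
  shows "deg_bell lam (n + m) =
    (\<Sum>j\<le>m. \<Sum>k\<le>n.
        smult (deg_stirling2 lam m j * real (n choose k)
                 * deg_fall lam (real j - real m * lam) (n - k))
              (monom 1 j * deg_bell lam k))"
proof -
  define B where "B n j = (\<Sum>k\<le>n. smult (real (n choose k) * deg_fall lam (real j - real m * lam) (n - k)) (deg_bell lam k))" for n j
  have R: "(\<Sum>j\<le>m. \<Sum>k\<le>n.
        smult (deg_stirling2 lam m j * real (n choose k)
                 * deg_fall lam (real j - real m * lam) (n - k))
              (monom 1 j * deg_bell lam k)) = (\<Sum>j\<le>m. smult (deg_stirling2 lam m j) (monom 1 j * B n j))"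
    unfolding B_def by (rule sum.cong[OF refl]) (simp add: regroup[symmetric] mult.assoc)
  have "deg_bell lam (n + m) = (\<Sum>j\<le>m. smult (deg_stirling2 lam m j) (monom 1 j * B n j))"
  proof (induction n)
    case 0
    show ?case by (simp add: B_def bell0 deg_fall_def smult_monom) (simp add: deg_bell_def)
  next
    case (Suc n)
    have "deg_bell lam (Suc n + m) = LL (- (real (n + m) * lam)) (deg_bell lam (n + m))"
      using bell_LL[of lam "n+m"] by simp
    also have "\<dots> = (\<Sum>j\<le>m. smult (deg_stirling2 lam m j) (monom 1 j * LL (real j - real (n + m) * lam) (B n j)))"
      by (simp add: Suc LL_sum LL_smult LL_xj')
    also have "\<dots> = (\<Sum>j\<le>m. smult (deg_stirling2 lam m j) (monom 1 j * B (Suc n) j))"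
    proof (rule sum.cong[OF refl])
      fix j
      let ?c = "real j - real m * lam"
      have "LL (real j - real (n + m) * lam) (B n j)
         = (\<Sum>k\<le>n. smult (real (n choose k) * deg_fall lam ?c (n - k))
              (deg_bell lam (Suc k) + smult (?c - real (n - k) * lam) (deg_bell lam k)))"
        unfolding B_def LL_sum LL_smult LL_bell
      proof (rule sum.cong[OF refl])
        fix k assume "k \<in> {..n}"
        then have "real j - real (n + m) * lam + real k * lam = ?c - real (n - k) * lam"
          by (simp add: of_nat_diff algebra_simps)
        then show "smult (real (n choose k) * deg_fall lam ?c (n - k))
            (deg_bell lam (Suc k) + smult (real j - real (n + m) * lam + real k * lam) (deg_bell lam k)) =
          smult (real (n choose k) * deg_fall lam ?c (n - k))
            (deg_bell lam (Suc k) + smult (?c - real (n - k) * lam) (deg_bell lam k))"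
          by (simp only:)
      qed
      also have "\<dots> = B (Suc n) j"
        unfolding B_def by (rule pascal_poly)
      finally show "smult (deg_stirling2 lam m j) (monom 1 j * LL (real j - real (n + m) * lam) (B n j)) =
         smult (deg_stirling2 lam m j) (monom 1 j * B (Suc n) j)" by simp
    qed
    finally show ?case .
  qed
  then show ?thesis using R by simp
qed

end
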